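(* Under the hypotheses (F1)–(F4), (G1)–(G2) of the context and for $\ell>0$, the set $\mathcal{N}_\ell$ of equilibrium (stationary) points of the Bresse system is bounded in $\mathcal{H}$. Here $y\in\mathcal{N}_\ell$ means $y=(\varphi,\psi,w,0,0,0)$ with $\varphi,\psi,w\in H^1_0(0,L)$ solving (weakly) $-k(\varphi_x+\psi+\ell w)_x-k_0\ell(w_x-\ell\varphi)+f_1(\varphi,\psi,w)=0$, $-b\psi_{xx}+k(\varphi_x+\psi+\ell w)+f_2(\varphi,\psi,w)=0$, $-k_0(w_x-\ell\varphi)_x+k\ell(\varphi_x+\psi+\ell w)+f_3(\varphi,\psi,w)=0$ on $(0,L)$.
   Context: Fix $L>0$, $\rho_1,\rho_2,b,k,k_0>0$, $\ell>0$; $\|\cdot\|$ is the $L^2(0,L)$ norm; $\mathcal{H}=H^1_0(0,L)^3\times L^2(0,L)^3$. The Bresse system is $\rho_1\varphi_{tt}-k(\varphi_x+\psi+\ell w)_x-k_0\ell(w_x-\ell\varphi)+g_1(\varphi_t)+f_1(\varphi,\psi,w)=0$, $\rho_2\psi_{tt}-b\psi_{xx}+k(\varphi_x+\psi+\ell w)+g_2(\psi_t)+f_2(\varphi,\psi,w)=0$, $\rho_1w_{tt}-k_0(w_x-\ell\varphi)_x+k\ell(\varphi_x+\psi+\ell w)+g_3(w_t)+f_3(\varphi,\psi,w)=0$ with Dirichlet boundary conditions. Let $\gamma_3>0$ satisfy $\|\varphi_x\|^2+\|\psi_x\|^2+\|w_x\|^2\le\gamma_3(b\|\psi_x\|^2+k\|\varphi_x+\psi+\ell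 w\|^2+k_0\|w_x-\ell\varphi\|^2)$ for all $\varphi,\psi,w\in H^1_0(0,L)$. Hypotheses: (F1) $F\in C^2(\mathbb{R}^3)$, $\nabla F=(f_1,f_2,f_3)$; (F2) there are $\beta,m_F\ge0$, $0\le\beta<\pi^2/(2\gamma_3L^2)$, with $F(u,v,w)\ge-\beta(u^2+v^2+w^2)-m_F$; (F3) there are $p\ge1$, $C_f>0$ with $|\nabla f_i(u,v,w)|\le C_f(1+|u|^{p-1}+|v|^{p-1}+|w|^{p-1})$; (F4) $\nabla F(u,v,w)\cdot(u,v,w)-F(u,v,w)\ge-\beta(u^2+v^2+w^2)-m_F$; (G1) $g_i\in C^1(\mathbb{R})$ increasing, $g_i(0)=0$; (G2) there are $m_i,M_i>0$ with $m_is^2\le g_i(s)s\le M_is^2$ for $|s|>1$. *)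

theory Defs
  imports "HOL-Analysis.Analysis"
begin

text \<open>Points of R^3 are represented as triples of type real \<times> real \<times> real,
whose product norm is the Euclidean norm.\<close>

definition L2 :: "real \<Rightarrow> (real \<Rightarrow> real) \<Rightarrow> bool" where
  "L2 L v \<longleftrightarrow> set_borel_measurable lborel {0..L} v \<and>
               set_integrable lborel {0..L} (\<lambda>x. (v x)\<^sup>2)"

definition nrm2 :: "real \<Rightarrow> (real \<Rightarrow> real) \<Rightarrow> real" where
  "nrm2 L v = (LINT x:{0..L}|lborel. (v x)\<^sup>2)"

text \<open>u belongs to H^1_0(0,L) with weak derivative u': u is the (absolutely continuous)
primitive of the L^2 function u' vanishing at both endpoints.\<close>
definition H10 :: "real \<Rightarrow> (real \<Rightarrow> real) \<Rightarrow> (real \<Rightarrow> real) \<Rightarrow> bool" where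
  "H10 L u u' \<longleftrightarrow> L2 L u' \<and> (\<forall>x\<in>{0..L}. u x = (LINT t:{0..x}|lborel. u' t)) \<and> u L = 0"

definition apow :: "real \<Rightarrow> real \<Rightarrow> real" where
  "apow x a = (if a = 0 then 1 else \<bar>x\<bar> powr a)"

definition equilibrium ::
  "real \<Rightarrow> real \<Rightarrow> real \<Rightarrow> real \<Rightarrow> real \<Rightarrow>
   (real \<times> real \<times> real \<Rightarrow> real) \<Rightarrow> (real \<times> real \<times> real \<Rightarrow> real) \<Rightarrow> (real \<times> real \<times> real \<Rightarrow> real) \<Rightarrow>
   (real \<Rightarrow> real) \<Rightarrow> (real \<Rightarrow> real) \<Rightarrow> (real \<Rightarrow> real) \<Rightarrow> (real \<Rightarrow> real) \<Rightarrow>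
   (real \<Rightarrow> real) \<Rightarrow> (real \<Rightarrow> real) \<Rightarrow> bool" where
  "equilibrium L b k k0 l f1 f2 f3 \<phi> \<phi>' \<psi> \<psi>' w w' \<longleftrightarrow>
     H10 L \<phi> \<phi>' \<and> H10 L \<psi> \<psi>' \<and> H10 L w w' \<and>
     (\<forall>\<xi> \<xi>'. H10 L \<xi> \<xi>' \<longrightarrow>
        (LINT x:{0..L}|lborel. k * (\<phi>' x + \<psi> x + l * w x) * \<xi>' x
            - k0 * l * (w' x - l * \<phi> x) * \<xi> x + f1 (\<phi> x, \<psi> x, w x) * \<xi> x) = 0 \<and>
        (LINT x:{0..L}|lborel. b * \<psi>' x * \<xi>' x
            + k * (\<phi>' x + \<psi> x + l * w x) * \<xi> x + f2 (\<phi> x, \<psi> x, w x) * \<xi> x) = 0 \<and>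
        (LINT x:{0..L}|lborel. k0 * (w' x - l * \<phi> x) * \<xi>' x
            + k * l * (\<phi>' x + \<psi> x + l * w x) * \<xi> x + f3 (\<phi> x, \<psi> x, w x) * \<xi> x) = 0)"

end

theory Submission imports Defs begin

lemma L2_meas: "L2 L f \<Longrightarrow> (\<lambda>x. indicator {0..L} x * f x) \<in> borel_measurable borel"
  unfolding L2_def set_borel_measurable_def by simp

lemma set_int_const: "set_integrable lborel {0..L::real} (\<lambda>x. c::real)"
  unfolding set_integrable_def
  by (auto intro!: integrable_scaleR_left integrable_indicator simp: emeasure_lborel_Icc_eq)

lemma L2_int: assumes "L2 L f" shows "set_integrable lborel {0..L} f"
proof (rule set_integrable_bound[where f="\<lambda>x. 1 + (f x)\<^sup>2"])
  show "set_integrable lborel {0..L} (\<lambda>x. 1 + (f x)\<^sup>2)"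
    using assms unfolding L2_def by (intro set_integral_add set_int_const) auto
  show "set_borel_measurable lborel {0..L} f" using assms unfolding L2_def by simp
  show "AE x in lborel. x \<in> {0..L} \<longrightarrow> norm (f x) \<le> norm (1 + (f x)\<^sup>2)"
  proof (intro AE_I2 impI)
    fix x
    have h: "0 \<le> (\<bar>f x\<bar> - 1)\<^sup>2" by simp
    have e: "(\<bar>f x\<bar> - 1)\<^sup>2 = (f x)\<^sup>2 - 2*\<bar>f x\<bar> + 1"
      by (simp add: power2_eq_square algebra_simps abs_mult_self_eq)
    have "\<bar>f x\<bar> \<le> 1 + (f x)\<^sup>2" using h e abs_ge_zero[of "f x"] by linarith
    then show "norm (f x) \<le> norm (1 + (f x)\<^sup>2)" by simp
  qed
qed

lemma H10_props:
  assumes H: "H10 L u u'"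
  shows "set_integrable lborel {0..L} u'"
    and "\<And>x. x \<in> {0..L} \<Longrightarrow> u x = integral {0..x} u'"
    and "continuous_on {0..L} u"
    and "(\<lambda>x. indicator {0..L} x * u x) \<in> borel_measurable borel"
    and "bounded (u ` {0..L})"
proof -
  show si: "set_integrable lborel {0..L} u'" using H L2_int unfolding H10_def by blast
  show eq: "\<And>x. x \<in> {0..L} \<Longrightarrow> u x = integral {0..x} u'"
  proof -
    fix x assume x: "x \<in> {0..L}"
    have "set_integrable lborel {0..x} u'" by (rule set_integrable_subset[OF si]) (use x in auto)
    then have "(LINT t:{0..x}|lborel. u' t) = integral {0..x} u'" by (rule set_borel_integral_eq_integral)
    then show "u x = integral {0..x} u'" using H x unfolding H10_def by auto
  qed
  have "u' integrable_on {0..L}" using si by (rule set_borel_integral_eq_integral)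
  then have "continuous_on {0..L} (\<lambda>x. integral {0..x} u')" by (rule indefinite_integral_continuous_1)
  then show c: "continuous_on {0..L} u" using eq by (metis (no_types, lifting) continuous_on_cong)
  show "(\<lambda>x. indicator {0..L} x * u x) \<in> borel_measurable borel"
    using borel_measurable_continuous_on_indicator[OF _ c] by simp
  show "bounded (u ` {0..L})" using c by (intro compact_imp_bounded compact_continuous_image) auto
qed


lemma cos_pos_aux: assumes L: "L > 0" and t: "t \<in> {0..L}" "t \<noteq> L/2" shows "\<bar>cos (pi*t/L)\<bar> > 0"
proof (cases "t < L/2")
  case True
  have "pi*t/L < pi/2" using True L by (simp add: field_simps)
  moreover have "pi*t/L \<ge> 0" using t L by simp
  ultimately show ?thesis using cos_gt_zero_pi[of "pi*t/L"] by simp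
next
  case False
  then have "t > L/2" using t by simp
  then have "pi - pi*t/L < pi/2" using L by (simp add: field_simps)
  moreover have "pi - pi*t/L \<ge> 0" using t L by (simp add: field_simps)
  ultimately have "cos (pi - pi*t/L) > 0" using cos_gt_zero_pi[of "pi - pi*t/L"] by simp
  then show ?thesis by simp
qed

lemma cos_ge_aux: assumes L: "L > 0" and t: "t \<in> {0..L/2}" shows "cos (pi*t/L) \<ge> 0"
proof -
  have "pi*t/L \<le> pi/2" using t L by (simp add: field_simps)
  moreover have "pi*t/L \<ge> 0" using t L by simp
  ultimately show ?thesis using pi_gt_zero by (intro cos_ge_zero) linarith+
qed

lemma cos_le_aux: assumes L: "L > 0" and t: "t \<in> {L/2..L}" shows "cos (pi*t/L) \<le> 0"
proof -
  have "pi - pi*t/L \<le> pi/2" using t L by (simp add: field_simps)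
  moreover have "pi - pi*t/L \<ge> 0" using t L by (simp add: field_simps)
  ultimately have "cos (pi - pi*t/L) \<ge> 0" using pi_gt_zero by (intro cos_ge_zero) linarith+
  then show ?thesis by simp
qed

lemma sin_ge_aux: assumes L: "L > 0" and t: "t \<in> {0..L}" shows "sin (pi*t/L) \<ge> 0"
proof -
  have "pi*t/L \<le> pi" using t L by (simp add: field_simps)
  moreover have "pi*t/L \<ge> 0" using t L by simp
  ultimately show ?thesis by (intro sin_ge_zero) auto
qed

lemma deriv_S: assumes "L > 0" shows "((\<lambda>x. L/pi * sin (pi*x/L)) has_real_derivative cos (pi*t/L)) (at t)"
proof -
  have e: "(\<lambda>x. L/pi * sin (pi*x/L)) = (\<lambda>x. L/pi * sin ((*) (pi/L) x))" by (simp add: field_simps)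
  have "((\<lambda>x. L/pi * sin ((*) (pi/L) x)) has_real_derivative L/pi * (cos ((*) (pi/L) t) * (pi/L))) (at t)"
    by (intro DERIV_cmult DERIV_fun_sin DERIV_cmult_Id)
  then show ?thesis unfolding e using assms by (simp add: field_simps)
qed

lemma deriv_T: assumes "L > 0" shows "((\<lambda>x. - (L/pi)\<^sup>2 * cos (pi*x/L)) has_real_derivative L/pi * sin (pi*t/L)) (at t)"
proof -
  have e: "(\<lambda>x. - (L/pi)\<^sup>2 * cos (pi*x/L)) = (\<lambda>x. - (L/pi)\<^sup>2 * cos ((*) (pi/L) x))" by (simp add: field_simps)
  have "((\<lambda>x. - (L/pi)\<^sup>2 * cos ((*) (pi/L) x)) has_real_derivative - (L/pi)\<^sup>2 * (- sin ((*) (pi/L) t) * (pi/L))) (at t)"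
    by (intro DERIV_cmult DERIV_fun_cos DERIV_cmult_Id)
  then show ?thesis unfolding e using assms by (simp add: field_simps power2_eq_square)
qed

lemma ftc_aux:
  assumes "a \<le> b" "\<And>x. (F has_real_derivative f x) (at x)"
  shows "(f has_integral (F b - F a)) {a..b}"
  using assms by (intro fundamental_theorem_of_calculus)
     (auto simp: has_real_derivative_iff_has_vector_derivative[symmetric] intro: has_field_derivative_at_within)

lemma nn_Ioc_Icc: fixes a b :: real shows "(\<integral>\<^sup>+x. ennreal (indicator {a<..b} x * f x) \<partial>lborel) = (\<integral>\<^sup>+x. ennreal (indicator {a..b} x * f x) \<partial>lborel)"
  by (rule nn_integral_cong_AE) (use AE_lborel_singleton[of a] in \<open>eventually_elim, auto simp: indicator_def\<close>)

lemma nn_Ioo_Icc: fixes a b :: real shows "(\<integral>\<^sup>+x. ennreal (indicator {a<..<b} x * f x) \<partial>lborel) = (\<integral>\<^sup>+x. ennreal (indicator {a..b} x * f x) \<partial>lborel)"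
  by (rule nn_integral_cong_AE)
     (use AE_lborel_singleton[of a] AE_lborel_singleton[of b] in \<open>eventually_elim, auto simp: indicator_def\<close>)

lemma wirtinger:
  fixes L :: real and u u' :: "real \<Rightarrow> real"
  assumes L: "L > 0" and H: "H10 L u u'"
  shows "(\<integral>\<^sup>+x. ennreal (indicator {0..L} x * (u x)\<^sup>2) \<partial>lborel)
          \<le> ennreal ((L/pi)\<^sup>2) * (\<integral>\<^sup>+x. ennreal (indicator {0..L} x * (u' x)\<^sup>2) \<partial>lborel)"
proof -
  define v where "v t = indicator {0..L} t * u' t" for t
  define c where "c t = \<bar>cos (pi*t/L)\<bar>" for t
  define S where "S x = L/pi * sin (pi*x/L)" for x
  define D where "D x = (if x \<le> L/2 then {0..x} else {x<..L})" for x :: real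
  have si: "set_integrable lborel {0..L} u'" by (rule H10_props(1)[OF H])
  have vm[measurable]: "v \<in> borel_measurable borel"
    using H unfolding H10_def v_def by (auto dest: L2_meas)
  have cm[measurable]: "c \<in> borel_measurable borel" unfolding c_def using L
    by (intro borel_measurable_continuous_onI continuous_intros) auto
  have Sm[measurable]: "S \<in> borel_measurable borel" unfolding S_def using L
    by (intro borel_measurable_continuous_onI continuous_intros) auto
  have Dsets[measurable]: "D x \<in> sets borel" for x by (simp add: D_def)
  have DL: "D x \<subseteq> {0..L}" if "x \<in> {0..L}" for x using that by (auto simp: D_def)
  have c0: "c t \<ge> 0" for t by (simp add: c_def)
  have cpos: "c t > 0" if "t \<in> {0..L}" "t \<noteq> L/2" for t using cos_pos_aux[OF L that] by (simp add: c_def)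
  have S0: "S x \<ge> 0" if "x \<in> {0..L}" for x using sin_ge_aux[OF L that] L by (simp add: S_def)
  have Dind: "indicator (D x) t = (of_bool ((x \<le> L/2 \<and> 0 \<le> t \<and> t \<le> x) \<or> (\<not> x \<le> L/2 \<and> x < t \<and> t \<le> L)) :: real)" for x t
    by (auto simp: D_def indicator_def)
  have uA: "\<bar>u x\<bar> = \<bar>integral\<^sup>L lborel (\<lambda>t. indicator (D x) t * v t)\<bar>" if x: "x \<in> {0..L}" for x
  proof (cases "x \<le> L/2")
    case True
    have "u x = (LINT t:{0..x}|lborel. u' t)" using H x unfolding H10_def by auto
    also have "\<dots> = integral\<^sup>L lborel (\<lambda>t. indicator (D x) t * v t)"
      unfolding set_lebesgue_integral_def using True x
      by (intro Bochner_Integration.integral_cong) (auto simp: D_def v_def indicator_def)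
    finally show ?thesis by simp
  next
    case False
    have s1: "set_integrable lborel {0..x} u'" by (rule set_integrable_subset[OF si]) (use x in auto)
    have s2: "set_integrable lborel {x<..L} u'" by (rule set_integrable_subset[OF si]) (use x in auto)
    have un: "{0..x} \<union> {x<..L} = {0..L}" using x by auto
    have "0 = u L" using H unfolding H10_def by simp
    also have "\<dots> = (LINT t:{0..L}|lborel. u' t)" using H L unfolding H10_def by auto
    also have "\<dots> = (LINT t:{0..x}|lborel. u' t) + (LINT t:{x<..L}|lborel. u' t)"
      unfolding un[symmetric] by (rule set_integral_Un[OF _ s1 s2]) auto
    also have "(LINT t:{0..x}|lborel. u' t) = u x" using H x unfolding H10_def by auto
    finally have "u x = - (LINT t:{x<..L}|lborel. u' t)" by simp
    also have "(LINT t:{x<..L}|lborel. u' t) = integral\<^sup>L lborel (\<lambda>t. indicator (D x) t * v t)"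
      unfolding set_lebesgue_integral_def using False x
      by (intro Bochner_Integration.integral_cong) (auto simp: D_def v_def indicator_def)
    finally show ?thesis by simp
  qed
  have stepD: "(\<integral>\<^sup>+t. ennreal (indicator (D x) t * c t) \<partial>lborel) = ennreal (S x)" if x: "x \<in> {0..L}" for x
  proof (cases "x \<le> L/2")
    case True
    have "((\<lambda>t. cos (pi*t/L)) has_integral (S x - S 0)) {0..x}"
      unfolding S_def using x by (intro ftc_aux deriv_S L) auto
    then have "(c has_integral (S x)) {0..x}"
      by (subst has_integral_cong[where g="\<lambda>t. cos (pi*t/L)"])
         (use True L cos_ge_aux[OF L] in \<open>auto simp: c_def S_def\<close>)
    then have "(\<integral>\<^sup>+t. ennreal (indicator {0..x} t * c t) \<partial>lborel) = ennreal (S x)"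
      by (intro nn_integral_has_integral_lebesgue c0)
    then show ?thesis using True by (simp add: D_def)
  next
    case False
    have "((\<lambda>t. - cos (pi*t/L)) has_integral ((- S L) - (- S x))) {x..L}"
      unfolding S_def using x
      by (intro ftc_aux DERIV_minus deriv_S L) (use x in auto)
    moreover have "(- S L) - (- S x) = S x" by (simp add: S_def)
    ultimately have "((\<lambda>t. - cos (pi*t/L)) has_integral S x) {x..L}" by simp
    then have "(c has_integral (S x)) {x..L}"
      by (subst has_integral_cong[where g="\<lambda>t. - cos (pi*t/L)"])
         (use False L cos_le_aux[OF L] x in \<open>auto simp: c_def\<close>)
    then have "(\<integral>\<^sup>+t. ennreal (indicator {x..L} t * c t) \<partial>lborel) = ennreal (S x)"
      by (intro nn_integral_has_integral_lebesgue c0)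
    then show ?thesis using False by (simp add: D_def nn_Ioc_Icc)
  qed
  have uB: "ennreal ((u x)\<^sup>2) \<le> ennreal (S x) * (\<integral>\<^sup>+t. ennreal (indicator (D x) t * ((v t)\<^sup>2 / c t)) \<partial>lborel)"
    if x: "x \<in> {0..L}" for x
  proof -
    have sD: "set_integrable lborel (D x) u'"
      by (rule set_integrable_subset[OF si]) (use DL[OF x] in auto)
    have int: "integrable lborel (\<lambda>t. indicator (D x) t * v t)"
      using sD unfolding set_integrable_def
      by (rule Bochner_Integration.integrable_cong[THEN iffD1, rotated 2])
         (use DL[OF x] in \<open>auto simp: v_def indicator_def\<close>)
    define f where "f t = ennreal (indicator (D x) t * \<bar>v t\<bar> / sqrt (c t))" for t
    define g where "g t = ennreal (indicator (D x) t * sqrt (c t))" for t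
    have [measurable]: "f \<in> borel_measurable borel" "g \<in> borel_measurable borel"
      unfolding f_def g_def by measurable
    have "ennreal \<bar>u x\<bar> \<le> (\<integral>\<^sup>+t. ennreal (norm (indicator (D x) t * v t)) \<partial>lborel)"
      using integral_norm_bound_ennreal[OF int] uA[OF x] by simp
    also have "\<dots> = (\<integral>\<^sup>+t. f t * g t \<partial>lborel)"
    proof (rule nn_integral_cong_AE)
      show "AE t in lborel. ennreal (norm (indicator (D x) t * v t)) = f t * g t"
        using AE_lborel_singleton[of "L/2"]
      proof eventually_elim
        case (elim t)
        show ?case
        proof (cases "t \<in> D x")
          case True
          then have "c t > 0" using cpos DL[OF x] elim by auto
          then have "\<bar>v t\<bar> / sqrt (c t) * sqrt (c t) = \<bar>v t\<bar>" by simp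
          then show ?thesis using True unfolding f_def g_def
            by (simp add: ennreal_mult[symmetric] c0)
        qed (simp add: f_def g_def)
      qed
    qed
    finally have a: "ennreal \<bar>u x\<bar> \<le> (\<integral>\<^sup>+t. f t * g t \<partial>lborel)" .
    have "ennreal ((u x)\<^sup>2) = (ennreal \<bar>u x\<bar>)\<^sup>2" by (simp add: ennreal_power)
    also have "\<dots> \<le> (\<integral>\<^sup>+t. f t * g t \<partial>lborel)\<^sup>2" using a by (intro power_mono) auto
    also have "\<dots> \<le> (\<integral>\<^sup>+t. (f t)\<^sup>2 \<partial>lborel) * (\<integral>\<^sup>+t. (g t)\<^sup>2 \<partial>lborel)"
      by (rule Cauchy_Schwarz_nn_integral) measurable
    also have "(\<integral>\<^sup>+t. (f t)\<^sup>2 \<partial>lborel) = (\<integral>\<^sup>+t. ennreal (indicator (D x) t * ((v t)\<^sup>2 / c t)) \<partial>lborel)"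
      by (intro nn_integral_cong) (auto simp: f_def ennreal_power c0 power_divide indicator_def)
    also have "(\<integral>\<^sup>+t. (g t)\<^sup>2 \<partial>lborel) = (\<integral>\<^sup>+t. ennreal (indicator (D x) t * c t) \<partial>lborel)"
      by (intro nn_integral_cong) (auto simp: g_def ennreal_power c0 indicator_def)
    also have "\<dots> = ennreal (S x)" by (rule stepD[OF x])
    finally show ?thesis by (simp add: mult.commute)
  qed
  have stepE: "(\<integral>\<^sup>+x. ennreal (indicator {0..L} x * indicator (D x) t * S x) \<partial>lborel) = ennreal ((L/pi)\<^sup>2 * c t)"
    if t: "t \<in> {0..L}" for t
  proof (cases "t \<le> L/2")
    case True
    have "(\<integral>\<^sup>+x. ennreal (indicator {0..L} x * indicator (D x) t * S x) \<partial>lborel)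
        = (\<integral>\<^sup>+x. ennreal (indicator {t..L/2} x * S x) \<partial>lborel)"
      by (intro nn_integral_cong) (use True t in \<open>auto simp: D_def indicator_def\<close>)
    also have "\<dots> = ennreal ((- (L/pi)\<^sup>2 * cos (pi*(L/2)/L)) - (- (L/pi)\<^sup>2 * cos (pi*t/L)))"
    proof (rule nn_integral_has_integral_lebesgue)
      show "\<And>x. x \<in> {t..L/2} \<Longrightarrow> 0 \<le> S x" using S0 t by auto
      show "(S has_integral (- (L/pi)\<^sup>2 * cos (pi*(L/2)/L)) - (- (L/pi)\<^sup>2 * cos (pi*t/L))) {t..L/2}"
        unfolding S_def using True by (intro ftc_aux[where F="\<lambda>x. - (L/pi)\<^sup>2 * cos (pi*x/L)"] deriv_T L)
    qed
    also have "(- (L/pi)\<^sup>2 * cos (pi*(L/2)/L)) - (- (L/pi)\<^sup>2 * cos (pi*t/L)) = (L/pi)\<^sup>2 * c t"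
      using L cos_ge_aux[OF L, of t] True t by (simp add: c_def)
    finally show ?thesis .
  next
    case False
    have "(\<integral>\<^sup>+x. ennreal (indicator {0..L} x * indicator (D x) t * S x) \<partial>lborel)
        = (\<integral>\<^sup>+x. ennreal (indicator {L/2<..<t} x * S x) \<partial>lborel)"
      by (intro nn_integral_cong) (use False t in \<open>auto simp: D_def indicator_def\<close>)
    also have "\<dots> = (\<integral>\<^sup>+x. ennreal (indicator {L/2..t} x * S x) \<partial>lborel)" by (rule nn_Ioo_Icc)
    also have "\<dots> = ennreal ((- (L/pi)\<^sup>2 * cos (pi*t/L)) - (- (L/pi)\<^sup>2 * cos (pi*(L/2)/L)))"
    proof (rule nn_integral_has_integral_lebesgue)
      show "\<And>x. x \<in> {L/2..t} \<Longrightarrow> 0 \<le> S x" using S0 t L by auto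
      show "(S has_integral (- (L/pi)\<^sup>2 * cos (pi*t/L)) - (- (L/pi)\<^sup>2 * cos (pi*(L/2)/L))) {L/2..t}"
        unfolding S_def using False by (intro ftc_aux[where F="\<lambda>x. - (L/pi)\<^sup>2 * cos (pi*x/L)"] deriv_T L) auto
    qed
    also have "(- (L/pi)\<^sup>2 * cos (pi*t/L)) - (- (L/pi)\<^sup>2 * cos (pi*(L/2)/L)) = (L/pi)\<^sup>2 * c t"
      using L cos_le_aux[OF L, of t] False t by (simp add: c_def)
    finally show ?thesis .
  qed
  define A where "A x = (\<integral>\<^sup>+t. ennreal (indicator (D x) t * ((v t)\<^sup>2 / c t)) \<partial>lborel)" for x
  have Gm: "(\<lambda>(x,t). ennreal (indicator {0..L} x * S x * (indicator (D x) t * ((v t)\<^sup>2 / c t))))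
           \<in> borel_measurable (lborel \<Otimes>\<^sub>M lborel)"
  proof -
    have "(\<lambda>p::real\<times>real. ennreal (indicator {0..L} (fst p) * S (fst p) *
        ((of_bool ((fst p \<le> L/2 \<and> 0 \<le> snd p \<and> snd p \<le> fst p) \<or> (\<not> fst p \<le> L/2 \<and> fst p < snd p \<and> snd p \<le> L)) :: real)
          * ((v (snd p))\<^sup>2 / c (snd p))))) \<in> borel_measurable (borel \<Otimes>\<^sub>M borel)"
      by measurable
    then show ?thesis
      by (subst measurable_cong_sets[OF sets_pair_measure_cong[OF sets_lborel sets_lborel] refl])
         (simp add: case_prod_beta' Dind)
  qed
  have "(\<integral>\<^sup>+x. ennreal (indicator {0..L} x * (u x)\<^sup>2) \<partial>lborel)
      \<le> (\<integral>\<^sup>+x. ennreal (indicator {0..L} x * S x) * A x \<partial>lborel)"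
  proof (rule nn_integral_mono)
    fix x show "ennreal (indicator {0..L} x * (u x)\<^sup>2) \<le> ennreal (indicator {0..L} x * S x) * A x"
      using uB[of x] unfolding A_def by (cases "x \<in> {0..L}") auto
  qed
  also have "\<dots> = (\<integral>\<^sup>+x. \<integral>\<^sup>+t. ennreal (indicator {0..L} x * S x * (indicator (D x) t * ((v t)\<^sup>2 / c t))) \<partial>lborel \<partial>lborel)"
  proof (rule nn_integral_cong)
    fix x
    have "ennreal (indicator {0..L} x * S x) * A x
        = (\<integral>\<^sup>+t. ennreal (indicator {0..L} x * S x) * ennreal (indicator (D x) t * ((v t)\<^sup>2 / c t)) \<partial>lborel)"
      unfolding A_def by (rule nn_integral_cmult[symmetric]) measurable
    also have "\<dots> = (\<integral>\<^sup>+t. ennreal (indicator {0..L} x * S x * (indicator (D x) t * ((v t)\<^sup>2 / c t))) \<partial>lborel)"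
      by (intro nn_integral_cong ennreal_mult'[symmetric]) (use S0 in \<open>auto simp: indicator_def\<close>)
    finally show "ennreal (indicator {0..L} x * S x) * A x = \<dots>" .
  qed
  also have "\<dots> = (\<integral>\<^sup>+t. \<integral>\<^sup>+x. ennreal (indicator {0..L} x * S x * (indicator (D x) t * ((v t)\<^sup>2 / c t))) \<partial>lborel \<partial>lborel)"
    using lborel_pair.Fubini'[OF Gm] by simp
  also have "\<dots> = (\<integral>\<^sup>+t. ennreal ((L/pi)\<^sup>2 * c t) * ennreal ((v t)\<^sup>2 / c t) \<partial>lborel)"
  proof (rule nn_integral_cong)
    fix t
    have "(\<integral>\<^sup>+x. ennreal (indicator {0..L} x * S x * (indicator (D x) t * ((v t)\<^sup>2 / c t))) \<partial>lborel)
        = (\<integral>\<^sup>+x. ennreal (indicator {0..L} x * indicator (D x) t * S x) * ennreal ((v t)\<^sup>2 / c t) \<partial>lborel)"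
    proof (intro nn_integral_cong)
      fix x
      have nn: "0 \<le> (v t)\<^sup>2 / c t" using c0[of t] by simp
      have "indicator {0..L} x * S x * (indicator (D x) t * ((v t)\<^sup>2 / c t))
          = (indicator {0..L} x * indicator (D x) t * S x) * ((v t)\<^sup>2 / c t)" (is "_ = ?X * ?Y") by (simp only: mult_ac)
      then show "ennreal (indicator {0..L} x * S x * (indicator (D x) t * ((v t)\<^sup>2 / c t)))
          = ennreal (indicator {0..L} x * indicator (D x) t * S x) * ennreal ((v t)\<^sup>2 / c t)"
        by (simp only: ennreal_mult''[OF nn])
    qed
    also have "\<dots> = (\<integral>\<^sup>+x. ennreal (indicator {0..L} x * indicator (D x) t * S x) \<partial>lborel) * ennreal ((v t)\<^sup>2 / c t)"
    proof (rule nn_integral_multc)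
      have "(\<lambda>x. ennreal (indicator {0..L} x * (of_bool ((x \<le> L/2 \<and> 0 \<le> t \<and> t \<le> x) \<or> (\<not> x \<le> L/2 \<and> x < t \<and> t \<le> L)) :: real) * S x))
          \<in> borel_measurable borel" by measurable
      then show "(\<lambda>x. ennreal (indicator {0..L} x * indicator (D x) t * S x)) \<in> borel_measurable lborel"
        by (simp add: Dind)
    qed
    also have "\<dots> = ennreal ((L/pi)\<^sup>2 * c t) * ennreal ((v t)\<^sup>2 / c t)"
      by (cases "t \<in> {0..L}") (auto simp: stepE v_def)
    finally show "(\<integral>\<^sup>+x. ennreal (indicator {0..L} x * S x * (indicator (D x) t * ((v t)\<^sup>2 / c t))) \<partial>lborel) = \<dots>" .
  qed
  also have "\<dots> = (\<integral>\<^sup>+t. ennreal ((L/pi)\<^sup>2) * ennreal (indicator {0..L} t * (u' t)\<^sup>2) \<partial>lborel)"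
  proof (rule nn_integral_cong_AE)
    show "AE t in lborel. ennreal ((L/pi)\<^sup>2 * c t) * ennreal ((v t)\<^sup>2 / c t) = ennreal ((L/pi)\<^sup>2) * ennreal (indicator {0..L} t * (u' t)\<^sup>2)"
      using AE_lborel_singleton[of "L/2"]
    proof eventually_elim
      case (elim t)
      show ?case
      proof (cases "t \<in> {0..L}")
        case True
        then have "c t > 0" using cpos elim by auto
        then have "(L/pi)\<^sup>2 * c t * ((v t)\<^sup>2 / c t) = (L/pi)\<^sup>2 * (indicator {0..L} t * (u' t)\<^sup>2)"
          using True by (simp add: v_def)
        then show ?thesis using c0[of t]
          by (simp add: ennreal_mult[symmetric])
      qed (simp add: v_def)
    qed
  qed
  also have "\<dots> = ennreal ((L/pi)\<^sup>2) * (\<integral>\<^sup>+x. ennreal (indicator {0..L} x * (u' x)\<^sup>2) \<partial>lborel)"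
  proof (rule nn_integral_cmult)
    have "(\<lambda>x. ennreal ((v x)\<^sup>2)) \<in> borel_measurable borel" by measurable
    moreover have "(v x)\<^sup>2 = indicator {0..L} x * (u' x)\<^sup>2" for x by (simp add: v_def indicator_def)
    ultimately show "(\<lambda>x. ennreal (indicator {0..L} x * (u' x)\<^sup>2)) \<in> borel_measurable lborel" by simp
  qed
  finally show ?thesis .
qed


lemma L2_bound:
  assumes m: "(\<lambda>x. indicator {0..L} x * f x) \<in> borel_measurable borel"
    and b: "\<And>x. x \<in> {0..L} \<Longrightarrow> \<bar>f x\<bar> \<le> B"
  shows "L2 L f"
proof -
  have "set_integrable lborel {0..L} (\<lambda>x. (f x)\<^sup>2)"
  proof (rule set_integrable_bound[where f="\<lambda>x. B\<^sup>2"])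
    show "set_integrable lborel {0..L} (\<lambda>x. B\<^sup>2)" by (rule set_int_const)
    have eq: "(\<lambda>x. indicator {0..L} x *\<^sub>R (f x)\<^sup>2) = (\<lambda>x. (indicator {0..L} x * f x)\<^sup>2)"
      by (auto simp: indicator_def fun_eq_iff)
    show "set_borel_measurable lborel {0..L} (\<lambda>x. (f x)\<^sup>2)"
      unfolding set_borel_measurable_def eq using m by simp
    show "AE x in lborel. x \<in> {0..L} \<longrightarrow> norm ((f x)\<^sup>2) \<le> norm (B\<^sup>2)"
    proof (intro AE_I2 impI)
      fix x assume x: "x \<in> {0..L}"
      have "\<bar>f x\<bar>\<^sup>2 \<le> B\<^sup>2" using b[OF x] by (intro power_mono) auto
      then show "norm ((f x)\<^sup>2) \<le> norm (B\<^sup>2)" by simp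
    qed
  qed
  then show ?thesis using m unfolding L2_def set_borel_measurable_def by simp
qed

lemma cont_L2:
  assumes c: "continuous_on {0..L} h"
  shows "L2 L h"
proof -
  have "bounded (h ` {0..L})" using c by (intro compact_imp_bounded compact_continuous_image) auto
  then obtain B where B0: "\<forall>y\<in>h ` {0..L}. norm y \<le> B" unfolding bounded_iff by blast
  then have B: "\<And>x. x \<in> {0..L} \<Longrightarrow> norm (h x) \<le> B" by auto
  show ?thesis
  proof (rule L2_bound)
    show "(\<lambda>x. indicator {0..L} x * h x) \<in> borel_measurable borel"
      using borel_measurable_continuous_on_indicator[OF _ c] by simp
    show "\<And>x. x \<in> {0..L} \<Longrightarrow> \<bar>h x\<bar> \<le> B" using B by simp
  qed
qed

lemma prod_int:
  assumes f: "L2 L f" and g: "L2 L g"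
  shows "set_integrable lborel {0..L} (\<lambda>x. f x * g x)"
proof (rule set_integrable_bound[where f="\<lambda>x. (f x)\<^sup>2 + (g x)\<^sup>2"])
  show "set_integrable lborel {0..L} (\<lambda>x. (f x)\<^sup>2 + (g x)\<^sup>2)"
    using f g unfolding L2_def by (intro set_integral_add) auto
  have eq: "(\<lambda>x. indicator {0..L} x *\<^sub>R (f x * g x)) = (\<lambda>x. (indicator {0..L} x * f x) * (indicator {0..L} x * g x))"
    by (auto simp: indicator_def fun_eq_iff)
  have [measurable]: "(\<lambda>x. indicator {0..L} x * f x) \<in> borel_measurable borel"
    "(\<lambda>x. indicator {0..L} x * g x) \<in> borel_measurable borel" using f g by (auto dest: L2_meas)
  show "set_borel_measurable lborel {0..L} (\<lambda>x. f x * g x)"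
    unfolding set_borel_measurable_def eq by simp
  show "AE x in lborel. x \<in> {0..L} \<longrightarrow> norm (f x * g x) \<le> norm ((f x)\<^sup>2 + (g x)\<^sup>2)"
  proof (intro AE_I2 impI)
    fix x
    have h: "0 \<le> (\<bar>f x\<bar> - \<bar>g x\<bar>)\<^sup>2" by simp
    have e: "(\<bar>f x\<bar> - \<bar>g x\<bar>)\<^sup>2 = (f x)\<^sup>2 + (g x)\<^sup>2 - 2 * \<bar>f x * g x\<bar>"
      by (simp add: power2_eq_square algebra_simps abs_mult_self_eq abs_mult)
    have "\<bar>f x * g x\<bar> \<le> (f x)\<^sup>2 + (g x)\<^sup>2" using h e abs_ge_zero[of "f x * g x"] by linarith
    then show "norm (f x * g x) \<le> norm ((f x)\<^sup>2 + (g x)\<^sup>2)" by simp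
  qed
qed

lemma L2_add:
  assumes f: "L2 L f" and g: "L2 L g"
  shows "L2 L (\<lambda>x. f x + g x)"
proof -
  have [measurable]: "(\<lambda>x. indicator {0..L} x * f x) \<in> borel_measurable borel"
    "(\<lambda>x. indicator {0..L} x * g x) \<in> borel_measurable borel" using f g by (auto dest: L2_meas)
  have eq: "(\<lambda>x. indicator {0..L} x *\<^sub>R (f x + g x)) = (\<lambda>x. indicator {0..L} x * f x + indicator {0..L} x * g x)"
    by (auto simp: indicator_def fun_eq_iff)
  have i: "set_integrable lborel {0..L} (\<lambda>x. (f x)\<^sup>2 + (g x)\<^sup>2 + 2 * (f x * g x))"
    using f g prod_int[OF f g] unfolding L2_def by (intro set_integral_add set_integrable_mult_right) auto
  have eq2: "(\<lambda>x. (f x + g x)\<^sup>2) = (\<lambda>x. (f x)\<^sup>2 + (g x)\<^sup>2 + 2 * (f x * g x))"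
    by (auto simp: fun_eq_iff power2_eq_square algebra_simps)
  show ?thesis unfolding L2_def set_borel_measurable_def eq eq2 using i by simp
qed

lemma L2_cmult:
  assumes f: "L2 L f"
  shows "L2 L (\<lambda>x. c * f x)"
proof -
  have [measurable]: "(\<lambda>x. indicator {0..L} x * f x) \<in> borel_measurable borel" using f by (auto dest: L2_meas)
  have eq: "(\<lambda>x. indicator {0..L} x *\<^sub>R (c * f x)) = (\<lambda>x. c * (indicator {0..L} x * f x))"
    by (auto simp: indicator_def fun_eq_iff)
  have i: "set_integrable lborel {0..L} (\<lambda>x. c\<^sup>2 * (f x)\<^sup>2)"
    using f unfolding L2_def by (intro set_integrable_mult_right) auto
  have eq2: "(\<lambda>x. (c * f x)\<^sup>2) = (\<lambda>x. c\<^sup>2 * (f x)\<^sup>2)"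
    by (auto simp: fun_eq_iff power2_eq_square algebra_simps)
  show ?thesis unfolding L2_def set_borel_measurable_def eq eq2 using i by simp
qed

lemma L2_diff:
  assumes f: "L2 L f" and g: "L2 L g"
  shows "L2 L (\<lambda>x. f x - g x)"
proof -
  have "L2 L (\<lambda>x. f x + (-1) * g x)" by (intro L2_add L2_cmult f g)
  then show ?thesis by simp
qed

lemma nrm2_nonneg: "nrm2 L f \<ge> 0"
  unfolding nrm2_def set_lebesgue_integral_def by (intro Bochner_Integration.integral_nonneg) (auto simp: indicator_def)

lemma set_int_const_val: fixes L c :: real assumes "L \<ge> 0" shows "(LINT x:{0..L}|lborel. c) = c * L"
proof -
  have "(LINT x:{0..L}|lborel. c) = integral {0..L} (\<lambda>x. c)"
    using set_borel_integral_eq_integral(2)[OF set_int_const[of L c]] by simp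
  then show ?thesis using assms by simp
qed

lemma wirt_nrm:
  assumes L: "L > 0" and H: "H10 L u u'"
  shows "nrm2 L u \<le> (L/pi)\<^sup>2 * nrm2 L u'"
proof -
  have Lu: "L2 L u" by (rule cont_L2[OF H10_props(3)[OF H]])
  have Lu': "L2 L u'" using H unfolding H10_def by simp
  have e: "ennreal (nrm2 L f) = (\<integral>\<^sup>+x. ennreal (indicator {0..L} x * (f x)\<^sup>2) \<partial>lborel)" if "L2 L f" for f
  proof -
    have "integrable lborel (\<lambda>x. indicator {0..L} x * (f x)\<^sup>2)"
      using that unfolding L2_def set_integrable_def by simp
    then show ?thesis unfolding nrm2_def set_lebesgue_integral_def
      by (subst nn_integral_eq_integral) (auto simp: indicator_def)
  qed
  have "ennreal (nrm2 L u) \<le> ennreal ((L/pi)\<^sup>2) * ennreal (nrm2 L u')"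
    unfolding e[OF Lu] e[OF Lu'] by (rule wirtinger[OF L H])
  also have "\<dots> = ennreal ((L/pi)\<^sup>2 * nrm2 L u')" by (rule ennreal_mult'[symmetric]) simp
  finally show ?thesis using nrm2_nonneg[of L u'] by (subst (asm) ennreal_le_iff) auto
qed

theorem lemma4p4:
  fixes L \<rho>1 \<rho>2 b k k0 l \<gamma>3 \<beta> mF p Cf :: real
    and F f1 f2 f3 :: "real \<times> real \<times> real \<Rightarrow> real"
    and Df1 Df2 Df3 :: "real \<times> real \<times> real \<Rightarrow> real \<times> real \<times> real"
    and g1 g2 g3 g1' g2' g3' :: "real \<Rightarrow> real"
    and m1 m2 m3 M1 M2 M3 :: real
  assumes pos: "L > 0" "\<rho>1 > 0" "\<rho>2 > 0" "b > 0" "k > 0" "k0 > 0" "l > 0"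
    and gamma3: "\<gamma>3 > 0"
      "\<And>\<phi> \<phi>' \<psi> \<psi>' w w'. H10 L \<phi> \<phi>' \<Longrightarrow> H10 L \<psi> \<psi>' \<Longrightarrow> H10 L w w' \<Longrightarrow>
         nrm2 L \<phi>' + nrm2 L \<psi>' + nrm2 L w' \<le>
         \<gamma>3 * (b * nrm2 L \<psi>' + k * nrm2 L (\<lambda>x. \<phi>' x + \<psi> x + l * w x)
                + k0 * nrm2 L (\<lambda>x. w' x - l * \<phi> x))"
    and F1: "\<And>z. (F has_derivative (\<lambda>h. (f1 z, f2 z, f3 z) \<bullet> h)) (at z)"
      "\<And>z. (f1 has_derivative (\<lambda>h. Df1 z \<bullet> h)) (at z)"
      "\<And>z. (f2 has_derivative (\<lambda>h. Df2 z \<bullet> h)) (at z)"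
      "\<And>z. (f3 has_derivative (\<lambda>h. Df3 z \<bullet> h)) (at z)"
      "continuous_on UNIV Df1" "continuous_on UNIV Df2" "continuous_on UNIV Df3"
    and F2: "\<beta> \<ge> 0" "mF \<ge> 0" "\<beta> < pi\<^sup>2 / (2 * \<gamma>3 * L\<^sup>2)"
      "\<And>u v w. F (u, v, w) \<ge> - \<beta> * (u\<^sup>2 + v\<^sup>2 + w\<^sup>2) - mF"
    and F3: "p \<ge> 1" "Cf > 0"
      "\<And>u v w. norm (Df1 (u, v, w)) \<le> Cf * (1 + apow u (p - 1) + apow v (p - 1) + apow w (p - 1))"
      "\<And>u v w. norm (Df2 (u, v, w)) \<le> Cf * (1 + apow u (p - 1) + apow v (p - 1) + apow w (p - 1))"
      "\<And>u v w. norm (Df3 (u, v, w)) \<le> Cf * (1 + apow u (p - 1) + apow v (p - 1) + apow w (p - 1))"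
    and F4: "\<And>u v w. (f1 (u, v, w), f2 (u, v, w), f3 (u, v, w)) \<bullet> (u, v, w) - F (u, v, w)
                        \<ge> - \<beta> * (u\<^sup>2 + v\<^sup>2 + w\<^sup>2) - mF"
    and G1: "\<And>s. (g1 has_real_derivative g1' s) (at s)" "continuous_on UNIV g1'"
      "\<And>s. (g2 has_real_derivative g2' s) (at s)" "continuous_on UNIV g2'"
      "\<And>s. (g3 has_real_derivative g3' s) (at s)" "continuous_on UNIV g3'"
      "mono g1" "mono g2" "mono g3" "g1 0 = 0" "g2 0 = 0" "g3 0 = 0"
    and G2: "m1 > 0" "m2 > 0" "m3 > 0" "M1 > 0" "M2 > 0" "M3 > 0"
      "\<And>s. \<bar>s\<bar> > 1 \<Longrightarrow> m1 * s\<^sup>2 \<le> g1 s * s \<and> g1 s * s \<le> M1 * s\<^sup>2"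
      "\<And>s. \<bar>s\<bar> > 1 \<Longrightarrow> m2 * s\<^sup>2 \<le> g2 s * s \<and> g2 s * s \<le> M2 * s\<^sup>2"
      "\<And>s. \<bar>s\<bar> > 1 \<Longrightarrow> m3 * s\<^sup>2 \<le> g3 s * s \<and> g3 s * s \<le> M3 * s\<^sup>2"
  shows "\<exists>R. \<forall>\<phi> \<phi>' \<psi> \<psi>' w w'.
           equilibrium L b k k0 l f1 f2 f3 \<phi> \<phi>' \<psi> \<psi>' w w' \<longrightarrow>
           nrm2 L \<phi> + nrm2 L \<phi>' + nrm2 L \<psi> + nrm2 L \<psi>' + nrm2 L w + nrm2 L w' \<le> R"
proof -
  define a where "a = (L/pi)\<^sup>2"
  define \<theta> where "\<theta> = 2 * \<beta> * a * \<gamma>3"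
  define C where "C = 2 * mF * L"
  have a0: "a \<ge> 0" by (simp add: a_def)
  have th1: "\<theta> < 1"
  proof -
    have d: "2 * \<gamma>3 * L\<^sup>2 > 0" using pos(1) gamma3(1) by simp
    have "\<beta> * (2 * \<gamma>3 * L\<^sup>2) < pi\<^sup>2" using F2(3) d by (simp add: less_divide_eq)
    moreover have "\<theta> = \<beta> * (2 * \<gamma>3 * L\<^sup>2) / pi\<^sup>2" by (simp add: \<theta>_def a_def power_divide)
    ultimately show ?thesis by (simp add: divide_less_eq)
  qed
  have f1c: "continuous_on UNIV f1" "continuous_on UNIV f2" "continuous_on UNIV f3"
    using has_derivative_continuous[OF F1(2)] has_derivative_continuous[OF F1(3)] has_derivative_continuous[OF F1(4)]
    by (auto intro: continuous_at_imp_continuous_on)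
  show ?thesis
  proof (intro exI allI impI)
    fix \<phi> \<phi>' \<psi> \<psi>' w w'
    assume eqm: "equilibrium L b k k0 l f1 f2 f3 \<phi> \<phi>' \<psi> \<psi>' w w'"
    have H1: "H10 L \<phi> \<phi>'" and H2: "H10 L \<psi> \<psi>'" and H3: "H10 L w w'"
      using eqm unfolding equilibrium_def by auto
    define P where "P = (\<lambda>x. \<phi>' x + \<psi> x + l * w x)"
    define Q where "Q = (\<lambda>x. w' x - l * \<phi> x)"
    define h1 where "h1 = (\<lambda>x. f1 (\<phi> x, \<psi> x, w x))"
    define h2 where "h2 = (\<lambda>x. f2 (\<phi> x, \<psi> x, w x))"
    define h3 where "h3 = (\<lambda>x. f3 (\<phi> x, \<psi> x, w x))"
    have e1: "(LINT x:{0..L}|lborel. k * P x * \<phi>' x - k0 * l * Q x * \<phi> x + h1 x * \<phi> x) = 0"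
      using eqm H1 unfolding equilibrium_def by (simp only: P_def Q_def h1_def)
    have e2: "(LINT x:{0..L}|lborel. b * \<psi>' x * \<psi>' x + k * P x * \<psi> x + h2 x * \<psi> x) = 0"
      using eqm H2 unfolding equilibrium_def by (simp only: P_def Q_def h2_def)
    have e3: "(LINT x:{0..L}|lborel. k0 * Q x * w' x + k * l * P x * w x + h3 x * w x) = 0"
      using eqm H3 unfolding equilibrium_def by (simp only: P_def Q_def h3_def)
    have c1: "continuous_on {0..L} \<phi>" "continuous_on {0..L} \<psi>" "continuous_on {0..L} w"
      using H10_props(3)[OF H1] H10_props(3)[OF H2] H10_props(3)[OF H3] by auto
    have cu: "continuous_on {0..L} (\<lambda>x. (\<phi> x, \<psi> x, w x))" using c1 by (intro continuous_on_Pair)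
    have L\<phi>: "L2 L \<phi>" and L\<psi>: "L2 L \<psi>" and Lw: "L2 L w" using c1 by (auto intro: cont_L2)
    have L\<phi>': "L2 L \<phi>'" and L\<psi>': "L2 L \<psi>'" and Lw': "L2 L w'" using H1 H2 H3 unfolding H10_def by auto
    have Lh1: "L2 L h1" unfolding h1_def by (rule cont_L2, rule continuous_on_compose2[OF f1c(1) cu]) auto
    have Lh2: "L2 L h2" unfolding h2_def by (rule cont_L2, rule continuous_on_compose2[OF f1c(2) cu]) auto
    have Lh3: "L2 L h3" unfolding h3_def by (rule cont_L2, rule continuous_on_compose2[OF f1c(3) cu]) auto
    have LP: "L2 L P" unfolding P_def by (intro L2_add L2_cmult L\<phi>' L\<psi> Lw)
    have LQ: "L2 L Q" unfolding Q_def by (intro L2_diff L2_cmult Lw' L\<phi>)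
    have LkP: "L2 L (\<lambda>x. k * P x)" and Lk0lQ: "L2 L (\<lambda>x. k0 * l * Q x)" and Lb\<psi>': "L2 L (\<lambda>x. b * \<psi>' x)"
      and Lk0Q: "L2 L (\<lambda>x. k0 * Q x)" and LklP: "L2 L (\<lambda>x. k * l * P x)"
      using LP LQ L\<psi>' by (auto intro: L2_cmult)
    have i1: "set_integrable lborel {0..L} (\<lambda>x. k * P x * \<phi>' x - k0 * l * Q x * \<phi> x + h1 x * \<phi> x)"
      by (intro set_integral_add(1) set_integral_diff(1) prod_int LkP L\<phi>' Lk0lQ L\<phi> Lh1)
    have i2: "set_integrable lborel {0..L} (\<lambda>x. b * \<psi>' x * \<psi>' x + k * P x * \<psi> x + h2 x * \<psi> x)"
      by (intro set_integral_add(1) prod_int Lb\<psi>' L\<psi>' LkP L\<psi> Lh2)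
    have i3: "set_integrable lborel {0..L} (\<lambda>x. k0 * Q x * w' x + k * l * P x * w x + h3 x * w x)"
      by (intro set_integral_add(1) prod_int Lk0Q Lw' LklP Lw Lh3)
    define G where "G = (\<lambda>x. h1 x * \<phi> x + h2 x * \<psi> x + h3 x * w x)"
    have iG: "set_integrable lborel {0..L} G" unfolding G_def
      by (intro set_integral_add(1) prod_int Lh1 Lh2 Lh3 L\<phi> L\<psi> Lw)
    have iP: "set_integrable lborel {0..L} (\<lambda>x. (P x)\<^sup>2)" using LP unfolding L2_def by simp
    have iQ: "set_integrable lborel {0..L} (\<lambda>x. (Q x)\<^sup>2)" using LQ unfolding L2_def by simp
    have i\<psi>': "set_integrable lborel {0..L} (\<lambda>x. (\<psi>' x)\<^sup>2)" using L\<psi>' unfolding L2_def by simp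
    have iu: "set_integrable lborel {0..L} (\<lambda>x. (\<phi> x)\<^sup>2)" "set_integrable lborel {0..L} (\<lambda>x. (\<psi> x)\<^sup>2)"
      "set_integrable lborel {0..L} (\<lambda>x. (w x)\<^sup>2)" using L\<phi> L\<psi> Lw unfolding L2_def by auto
    define E where "E = b * nrm2 L \<psi>' + k * nrm2 L P + k0 * nrm2 L Q"
    have Eeq: "E + (LINT x:{0..L}|lborel. G x) = 0"
    proof -
      have "0 = (LINT x:{0..L}|lborel. k * P x * \<phi>' x - k0 * l * Q x * \<phi> x + h1 x * \<phi> x)
              + (LINT x:{0..L}|lborel. b * \<psi>' x * \<psi>' x + k * P x * \<psi> x + h2 x * \<psi> x)
              + (LINT x:{0..L}|lborel. k0 * Q x * w' x + k * l * P x * w x + h3 x * w x)"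
        using e1 e2 e3 by simp
      also have "\<dots> = (LINT x:{0..L}|lborel. (k * P x * \<phi>' x - k0 * l * Q x * \<phi> x + h1 x * \<phi> x)
              + (b * \<psi>' x * \<psi>' x + k * P x * \<psi> x + h2 x * \<psi> x)
              + (k0 * Q x * w' x + k * l * P x * w x + h3 x * w x))"
        using i1 i2 i3 by (simp add: set_integral_add(2) set_integral_add(1))
      also have "\<dots> = (LINT x:{0..L}|lborel. (b * (\<psi>' x)\<^sup>2 + k * (P x)\<^sup>2 + k0 * (Q x)\<^sup>2) + G x)"
        by (intro set_lebesgue_integral_cong)
           (auto simp: P_def Q_def G_def power2_eq_square algebra_simps)
      also have "\<dots> = (LINT x:{0..L}|lborel. b * (\<psi>' x)\<^sup>2 + k * (P x)\<^sup>2 + k0 * (Q x)\<^sup>2) + (LINT x:{0..L}|lborel. G x)"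
        using iP iQ i\<psi>' iG by (simp add: set_integral_add(2) set_integral_add(1))
      also have "(LINT x:{0..L}|lborel. b * (\<psi>' x)\<^sup>2 + k * (P x)\<^sup>2 + k0 * (Q x)\<^sup>2) = E"
        using iP iQ i\<psi>' unfolding E_def nrm2_def by (simp add: set_integral_add(2) set_integral_add(1))
      finally show ?thesis by simp
    qed
    define N where "N = nrm2 L \<phi> + nrm2 L \<psi> + nrm2 L w"
    define M where "M = nrm2 L \<phi>' + nrm2 L \<psi>' + nrm2 L w'"
    have Gbound: "G x \<ge> - 2 * \<beta> * ((\<phi> x)\<^sup>2 + (\<psi> x)\<^sup>2 + (w x)\<^sup>2) - 2 * mF" for x
    proof -
      have "G x - F (\<phi> x, \<psi> x, w x) \<ge> - \<beta> * ((\<phi> x)\<^sup>2 + (\<psi> x)\<^sup>2 + (w x)\<^sup>2) - mF"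
        using F4[of "\<phi> x" "\<psi> x" "w x"] by (simp add: G_def h1_def h2_def h3_def mult.commute)
      then show ?thesis using F2(4)[of "\<phi> x" "\<psi> x" "w x"] by linarith
    qed
    have iB: "set_integrable lborel {0..L} (\<lambda>x. - 2 * \<beta> * ((\<phi> x)\<^sup>2 + (\<psi> x)\<^sup>2 + (w x)\<^sup>2) - 2 * mF)"
      using iu by (intro set_integral_diff(1) set_integrable_mult_right set_integral_add(1) set_int_const) auto
    have "(LINT x:{0..L}|lborel. - 2 * \<beta> * ((\<phi> x)\<^sup>2 + (\<psi> x)\<^sup>2 + (w x)\<^sup>2) - 2 * mF)
          \<le> (LINT x:{0..L}|lborel. G x)"
      by (rule set_integral_mono[OF iB iG Gbound])
    moreover have "(LINT x:{0..L}|lborel. - 2 * \<beta> * ((\<phi> x)\<^sup>2 + (\<psi> x)\<^sup>2 + (w x)\<^sup>2) - 2 * mF)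
          = - 2 * \<beta> * N - C"
    proof -
      have iS: "set_integrable lborel {0..L} (\<lambda>x. (\<phi> x)\<^sup>2 + (\<psi> x)\<^sup>2 + (w x)\<^sup>2)"
        using iu by (intro set_integral_add(1))
      have iS2: "set_integrable lborel {0..L} (\<lambda>x. - 2 * \<beta> * ((\<phi> x)\<^sup>2 + (\<psi> x)\<^sup>2 + (w x)\<^sup>2))"
        using iS by (rule set_integrable_mult_right)
      have "(LINT x:{0..L}|lborel. - 2 * \<beta> * ((\<phi> x)\<^sup>2 + (\<psi> x)\<^sup>2 + (w x)\<^sup>2) - 2 * mF)
          = (LINT x:{0..L}|lborel. - 2 * \<beta> * ((\<phi> x)\<^sup>2 + (\<psi> x)\<^sup>2 + (w x)\<^sup>2)) - (LINT x:{0..L}|lborel. 2 * mF)"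
        by (rule set_integral_diff(2)[OF iS2 set_int_const])
      also have "(LINT x:{0..L}|lborel. - 2 * \<beta> * ((\<phi> x)\<^sup>2 + (\<psi> x)\<^sup>2 + (w x)\<^sup>2))
          = - 2 * \<beta> * (LINT x:{0..L}|lborel. (\<phi> x)\<^sup>2 + (\<psi> x)\<^sup>2 + (w x)\<^sup>2)"
        by (rule set_integral_mult_right)
      also have "(LINT x:{0..L}|lborel. (\<phi> x)\<^sup>2 + (\<psi> x)\<^sup>2 + (w x)\<^sup>2) = N"
        unfolding N_def nrm2_def
        using set_integral_add(2)[OF set_integral_add(1)[OF iu(1) iu(2)] iu(3)]
          set_integral_add(2)[OF iu(1) iu(2)] by simp
      also have "(LINT x:{0..L}|lborel. 2 * mF) = C"
        unfolding C_def using set_int_const_val[of L "2 * mF"] pos(1) by simp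
      finally show ?thesis by simp
    qed
    ultimately have EN: "E \<le> 2 * \<beta> * N + C" using Eeq by linarith
    have NM: "N \<le> a * M"
      using wirt_nrm[OF pos(1) H1] wirt_nrm[OF pos(1) H2] wirt_nrm[OF pos(1) H3]
      unfolding N_def M_def a_def by (simp add: algebra_simps)
    have ME: "M \<le> \<gamma>3 * E"
      using gamma3(2)[OF H1 H2 H3] unfolding M_def E_def P_def Q_def by (simp add: algebra_simps)
    have b0: "2 * \<beta> \<ge> 0" using F2(1) by simp
    have "E \<le> 2 * \<beta> * (a * M) + C" using EN mult_left_mono[OF NM b0] by linarith
    also have "2 * \<beta> * (a * M) \<le> 2 * \<beta> * (a * (\<gamma>3 * E))"
      using mult_left_mono[OF mult_left_mono[OF ME a0] b0] .
    also have "2 * \<beta> * (a * (\<gamma>3 * E)) = \<theta> * E" by (simp add: \<theta>_def)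
    finally have "(1 - \<theta>) * E \<le> C" by (simp add: algebra_simps)
    then have Eb: "E \<le> C / (1 - \<theta>)" using th1 by (simp add: le_divide_eq mult.commute)
    have "nrm2 L \<phi> + nrm2 L \<phi>' + nrm2 L \<psi> + nrm2 L \<psi>' + nrm2 L w + nrm2 L w' = N + M"
      unfolding N_def M_def by simp
    also have "\<dots> \<le> (a + 1) * M" using NM by (simp add: algebra_simps)
    also have "\<dots> \<le> (a + 1) * (\<gamma>3 * E)" using mult_left_mono[OF ME, of "a + 1"] a0 by simp
    also have "\<dots> \<le> (a + 1) * (\<gamma>3 * (C / (1 - \<theta>)))"
      using mult_left_mono[OF mult_left_mono[OF Eb, of \<gamma>3], of "a + 1"] a0 gamma3(1) by simp
    finally show "nrm2 L \<phi> + nrm2 L \<phi>' + nrm2 L \<psi> + nrm2 L \<psi>' + nrm2 L w + nrm2 L w'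
        \<le> (a + 1) * (\<gamma>3 * (C / (1 - \<theta>)))" .
  qed
qed

end
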